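(* There exists a class $\mathcal{J}$ (a formula with one free variable in the language $\{e,\vdash,\circ\}$) such that $\mathsf{Seq}\vdash\phi^{\mathcal{J}}$ for every axiom $\phi$ of $\mathsf{Seq}^*$. Furthermore, writing $x\preceq y$ for $\exists z\in\mathcal{J}\,[y=x\circ z]$, the theory $\mathsf{Seq}$ proves that $\preceq$ is reflexive and transitive, that $\forall y\in\mathcal{J}\,\forall x\,[x\preceq y\rightarrow x\in\mathcal{J}]$, and that $\forall w\,[e\vdash w\in\mathcal{J}]$.
   Context: $\mathsf{Seq}$ is the theory in the language $\{e,\vdash,\circ\}$ ($e$ constant, $\vdash$ and $\circ$ binary functions) with axioms: ($\mathsf{Seq}_1$) $\forall xy[x\vdash y\neq e]$; ($\mathsf{Seq}_2$) $\forall x_1x_2y_1y_2[x_1\vdash x_2=y_1\vdash y_2\rightarrow(x_1=y_1\wedge x_2=y_2)]$; ($\mathsf{Seq}_3$) $\forall x[x\circ e=x]$; ($\mathsf{Seq}_4$) $\forall xyz[x\circ(y\vdash z)=(x\circ y)\vdash z]$; ($\mathsf{Seq}_5$) $\forall x[x=e\vee\exists yz[x=y\vdash z]]$. $\mathsf{Seq}^*$ is the theory with axioms $\mathsf{Seq}_1$, $\mathsf{Seq}_2$, $\mathsf{Seq}_4$ and ($\mathsf{Seq}^*_3$) $\forall x[x\circ e=x\wedge e\circ x=x]$, ($\mathsf{Seq}^*_5$) $\forall xyzw[x\circ y=z\circ w\leftrightarrow\exists u[(z=x\circ u\wedge u\circ w=y)\vee(x=z\circ u\wedge u\circ y=w)]]$.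 For a class $K$ and formula $\phi$, the relativization $\phi^K$ is defined by: $\phi^K=\phi$ for atomic $\phi$, commuting with propositional connectives, $(\forall x\phi)^K=\forall x[K(x)\rightarrow\phi^K]$, $(\exists x\phi)^K=\exists x[K(x)\wedge\phi^K]$. $x\in K$ means $K(x)$. *)

theory Defs
  imports Main
begin

datatype tm = Var nat | E | Pr tm tm (* x \<turnstile> y *) | Cm tm tm (* x \<circ> y *)

datatype fm = Eq tm tm | FF | Neg fm | And fm fm | Or fm fm | Imp fm fm | Iff fm fm
  | All fm | Ex fm

fun fv_tm :: "tm \<Rightarrow> nat set" where
  "fv_tm (Var n) = {n}"
| "fv_tm E = {}"
| "fv_tm (Pr s t) = fv_tm s \<union> fv_tm t"
| "fv_tm (Cm s t) = fv_tm s \<union> fv_tm t"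

fun fv :: "fm \<Rightarrow> nat set" where
  "fv (Eq s t) = fv_tm s \<union> fv_tm t"
| "fv FF = {}"
| "fv (Neg p) = fv p"
| "fv (And p q) = fv p \<union> fv q"
| "fv (Or p q) = fv p \<union> fv q"
| "fv (Imp p q) = fv p \<union> fv q"
| "fv (Iff p q) = fv p \<union> fv q"
| "fv (All p) = (\<lambda>n. n - 1) ` (fv p - {0})"
| "fv (Ex p) = (\<lambda>n. n - 1) ` (fv p - {0})"

fun lift_tm :: "tm \<Rightarrow> tm" where
  "lift_tm (Var n) = Var (Suc n)"
| "lift_tm E = E"
| "lift_tm (Pr s t) = Pr (lift_tm s) (lift_tm t)"
| "lift_tm (Cm s t) = Cm (lift_tm s) (lift_tm t)"

fun eval_tm :: "'a \<Rightarrow> ('a \<Rightarrow> 'a \<Rightarrow> 'a) \<Rightarrow> ('a \<Rightarrow> 'a \<Rightarrow> 'a) \<Rightarrow> (nat \<Rightarrow> 'a) \<Rightarrow> tm \<Rightarrow> 'a" where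
  "eval_tm e pr cm env (Var n) = env n"
| "eval_tm e pr cm env E = e"
| "eval_tm e pr cm env (Pr s t) = pr (eval_tm e pr cm env s) (eval_tm e pr cm env t)"
| "eval_tm e pr cm env (Cm s t) = cm (eval_tm e pr cm env s) (eval_tm e pr cm env t)"

fun eval :: "'a \<Rightarrow> ('a \<Rightarrow> 'a \<Rightarrow> 'a) \<Rightarrow> ('a \<Rightarrow> 'a \<Rightarrow> 'a) \<Rightarrow> (nat \<Rightarrow> 'a) \<Rightarrow> fm \<Rightarrow> bool" where
  "eval e pr cm env (Eq s t) = (eval_tm e pr cm env s = eval_tm e pr cm env t)"
| "eval e pr cm env FF = False"
| "eval e pr cm env (Neg p) = (\<not> eval e pr cm env p)"
| "eval e pr cm env (And p q) = (eval e pr cm env p \<and> eval e pr cm env q)"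
| "eval e pr cm env (Or p q) = (eval e pr cm env p \<or> eval e pr cm env q)"
| "eval e pr cm env (Imp p q) = (eval e pr cm env p \<longrightarrow> eval e pr cm env q)"
| "eval e pr cm env (Iff p q) = (eval e pr cm env p \<longleftrightarrow> eval e pr cm env q)"
| "eval e pr cm env (All p) = (\<forall>a. eval e pr cm (case_nat a env) p)"
| "eval e pr cm env (Ex p) = (\<exists>a. eval e pr cm (case_nat a env) p)"

definition Seq1 :: fm where "Seq1 = All (All (Neg (Eq (Pr (Var 1) (Var 0)) E)))"
definition Seq2 :: fm where "Seq2 = All (All (All (All
   (Imp (Eq (Pr (Var 3) (Var 2)) (Pr (Var 1) (Var 0)))
        (And (Eq (Var 3) (Var 1)) (Eq (Var 2) (Var 0)))))))"
definition Seq3 :: fm where "Seq3 = All (Eq (Cm (Var 0) E) (Var 0))"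
definition Seq4 :: fm where "Seq4 = All (All (All
   (Eq (Cm (Var 2) (Pr (Var 1) (Var 0))) (Pr (Cm (Var 2) (Var 1)) (Var 0)))))"
definition Seq5 :: fm where "Seq5 = All (Or (Eq (Var 0) E) (Ex (Ex (Eq (Var 2) (Pr (Var 1) (Var 0))))))"
definition Seq3s :: fm where "Seq3s = All (And (Eq (Cm (Var 0) E) (Var 0)) (Eq (Cm E (Var 0)) (Var 0)))"
definition Seq5s :: fm where "Seq5s = All (All (All (All
   (Iff (Eq (Cm (Var 3) (Var 2)) (Cm (Var 1) (Var 0)))
        (Ex (Or (And (Eq (Var 2) (Cm (Var 4) (Var 0))) (Eq (Cm (Var 0) (Var 1)) (Var 3)))
                (And (Eq (Var 4) (Cm (Var 2) (Var 0))) (Eq (Cm (Var 0) (Var 3)) (Var 1)))))))))"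

definition Seq_axioms :: "fm set" where "Seq_axioms = {Seq1, Seq2, Seq3, Seq4, Seq5}"
definition Seq_star_axioms :: "fm set" where "Seq_star_axioms = {Seq1, Seq2, Seq3s, Seq4, Seq5s}"

text \<open>Seq proves phi, rendered semantically (via the completeness theorem and
  downward Loewenheim-Skolem for this countable language): phi holds under every
  assignment in every countable model of Seq. All models of Seq are infinite, so
  every countable model is isomorphic to one with universe nat.\<close>
definition Seq_proves :: "fm \<Rightarrow> bool" where
  "Seq_proves p \<longleftrightarrow> (\<forall>(e::nat) pr cm.
      (\<forall>ax\<in>Seq_axioms. \<forall>env. eval e pr cm env ax) \<longrightarrow> (\<forall>env. eval e pr cm env p))"

section \<open>Relativization to a class J (a formula whose only free variable is 0)\<close>

fun rel :: "fm \<Rightarrow> fm \<Rightarrow> fm" where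
  "rel J (Eq s t) = Eq s t"
| "rel J FF = FF"
| "rel J (Neg p) = Neg (rel J p)"
| "rel J (And p q) = And (rel J p) (rel J q)"
| "rel J (Or p q) = Or (rel J p) (rel J q)"
| "rel J (Imp p q) = Imp (rel J p) (rel J q)"
| "rel J (Iff p q) = Iff (rel J p) (rel J q)"
| "rel J (All p) = All (Imp J (rel J p))"
| "rel J (Ex p) = Ex (And J (rel J p))"

definition mem :: "fm \<Rightarrow> tm \<Rightarrow> fm" where
  "mem J t = Ex (And (Eq (Var 0) (lift_tm t)) J)"

definition prec :: "fm \<Rightarrow> tm \<Rightarrow> tm \<Rightarrow> fm" where
  "prec J x y = Ex (And (mem J (Var 0)) (Eq (lift_tm y) (Cm (lift_tm x) (Var 0))))"

definition prec_refl :: "fm \<Rightarrow> fm" where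
  "prec_refl J = All (prec J (Var 0) (Var 0))"
definition prec_trans :: "fm \<Rightarrow> fm" where
  "prec_trans J = All (All (All
     (Imp (And (prec J (Var 2) (Var 1)) (prec J (Var 1) (Var 0))) (prec J (Var 2) (Var 0)))))"
definition J_down_closed :: "fm \<Rightarrow> fm" where
  "J_down_closed J = All (Imp J (All (Imp (prec J (Var 0) (Var 1)) (mem J (Var 0)))))"
definition J_pair :: "fm \<Rightarrow> fm" where
  "J_pair J = All (mem J (Pr E (Var 0)))"

end

theory Submission
  imports Defs
begin

definition Asem :: "('a \<Rightarrow> 'a \<Rightarrow> 'a) \<Rightarrow> 'a \<Rightarrow> bool" where
  "Asem cm x = (\<forall>y z. cm (cm y z) x = cm y (cm z x))"
definition Rsem :: "('a \<Rightarrow> 'a \<Rightarrow> 'a) \<Rightarrow> 'a \<Rightarrow> bool" where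
  "Rsem cm x = (\<forall>a b. cm a x = cm b x \<longrightarrow> a = b)"
definition Psem :: "('a \<Rightarrow> 'a \<Rightarrow> 'a) \<Rightarrow> 'a \<Rightarrow> bool" where
  "Psem cm x = (\<forall>p q r. Asem cm p \<and> Asem cm q \<and> Asem cm r \<and> cm p q = cm r x \<longrightarrow>
     (\<exists>u. Asem cm u \<and> ((r = cm p u \<and> cm u x = q) \<or> (p = cm r u \<and> cm u q = x))))"
definition Jsem :: "'a \<Rightarrow> ('a \<Rightarrow> 'a \<Rightarrow> 'a) \<Rightarrow> 'a \<Rightarrow> bool" where
  "Jsem e cm x = (Asem cm x \<and> cm e x = x \<and> Rsem cm x \<and> Psem cm x)"

locale seqm =
  fixes e :: 'a and pr :: "'a \<Rightarrow> 'a \<Rightarrow> 'a" and cm :: "'a \<Rightarrow> 'a \<Rightarrow> 'a"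
  assumes s1: "pr x y \<noteq> e"
    and s2: "pr x1 x2 = pr y1 y2 \<Longrightarrow> x1 = y1 \<and> x2 = y2"
    and s3: "cm x e = x"
    and s4: "cm x (pr y z) = pr (cm x y) z"
    and s5: "x = e \<or> (\<exists>y z. x = pr y z)"
begin

abbreviation "A \<equiv> Asem cm"
abbreviation "J \<equiv> Jsem e cm"

lemma A_assoc: "A c \<Longrightarrow> cm (cm a b) c = cm a (cm b c)"
  by (simp add: Asem_def)

lemma A_e: "A e" by (simp add: Asem_def s3)
lemma A_pr: "A x \<Longrightarrow> A (pr x a)" by (simp add: Asem_def s4)
lemma A_pred: "A (pr x a) \<Longrightarrow> A x"
  unfolding Asem_def by (metis s2 s4)
lemma A_cm: "A x \<Longrightarrow> A y \<Longrightarrow> A (cm x y)"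
  unfolding Asem_def by metis

lemma J_e: "J e"
  unfolding Jsem_def Rsem_def Psem_def
  by (auto simp: A_e s3)

lemma J_pr: assumes "J x" shows "J (pr x a)"
proof -
  have Ax: "A x" and Lx: "cm e x = x" and Rx: "Rsem cm x" and Px: "Psem cm x"
    using assms by (auto simp: Jsem_def)
  have "A (pr x a)" using Ax A_pr by blast
  moreover have "cm e (pr x a) = pr x a" by (simp add: s4 Lx)
  moreover have "Rsem cm (pr x a)" using Rx unfolding Rsem_def by (metis s2 s4)
  moreover have "Psem cm (pr x a)" unfolding Psem_def
  proof (intro allI impI)
    fix p q r assume h: "A p \<and> A q \<and> A r \<and> cm p q = cm r (pr x a)"
    show "\<exists>u. A u \<and> ((r = cm p u \<and> cm u (pr x a) = q) \<or> (p = cm r u \<and> cm u q = pr x a))"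
    proof (cases "q = e")
      case True
      then show ?thesis using h \<open>A (pr x a)\<close> by (intro exI[of _ "pr x a"]) (auto simp: s3)
    next
      case False
      then obtain q' b where q: "q = pr q' b" using s5 by blast
      have "pr (cm p q') b = pr (cm r x) a" using h q by (simp add: s4)
      then have eq: "cm p q' = cm r x" and ba: "b = a" using s2 by blast+
      have "A q'" using h q A_pred by blast
      then obtain u where u: "A u" "(r = cm p u \<and> cm u x = q') \<or> (p = cm r u \<and> cm u q' = x)"
        using Px eq h unfolding Psem_def by blast
      then show ?thesis using q ba by (intro exI[of _ u]) (auto simp: s4)
    qed
  qed
  ultimately show ?thesis by (simp add: Jsem_def)
qed

lemma J_cm: assumes "J x1" "J x2" shows "J (cm x1 x2)"
proof -
  have A1: "A x1" and L1: "cm e x1 = x1" and R1: "Rsem cm x1" and P1: "Psem cm x1"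
    using assms by (auto simp: Jsem_def)
  have A2: "A x2" and L2: "cm e x2 = x2" and R2: "Rsem cm x2" and P2: "Psem cm x2"
    using assms by (auto simp: Jsem_def)
  have "A (cm x1 x2)" using A1 A2 A_cm by blast
  moreover have "cm e (cm x1 x2) = cm x1 x2" using A_assoc[OF A2, of e x1] L1 by simp
  moreover have "Rsem cm (cm x1 x2)" using R1 R2 A_assoc[OF A2] unfolding Rsem_def by metis
  moreover have "Psem cm (cm x1 x2)" unfolding Psem_def
  proof (intro allI impI)
    fix x y z assume h: "A x \<and> A y \<and> A z \<and> cm x y = cm z (cm x1 x2)"
    have e1: "cm x y = cm (cm z x1) x2" using h A_assoc[OF A2] by simp
    have Az1: "A (cm z x1)" using h A1 A_cm by blast
    obtain u where u: "A u" "(cm z x1 = cm x u \<and> cm u x2 = y) \<or> (x = cm (cm z x1) u \<and> cm u y = x2)"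
      using P2 e1 h Az1 unfolding Psem_def by blast
    show "\<exists>t. A t \<and> ((z = cm x t \<and> cm t (cm x1 x2) = y) \<or> (x = cm z t \<and> cm t y = cm x1 x2))"
      using u(2)
    proof
      assume c: "cm z x1 = cm x u \<and> cm u x2 = y"
      then obtain t where t: "A t" "(z = cm x t \<and> cm t x1 = u) \<or> (x = cm z t \<and> cm t u = x1)"
        using P1 h u(1) unfolding Psem_def by metis
      show ?thesis using t(2)
      proof
        assume "z = cm x t \<and> cm t x1 = u"
        then show ?thesis using t(1) c A_assoc[OF A2, of t x1] by auto
      next
        assume "x = cm z t \<and> cm t u = x1"
        then show ?thesis using t(1) c A_assoc[OF A2, of t u] by auto
      qed
    next
      assume c: "x = cm (cm z x1) u \<and> cm u y = x2"
      have "x = cm z (cm x1 u)" using c A_assoc[OF u(1)] by simp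
      moreover have "cm (cm x1 u) y = cm x1 x2" using c A_assoc h by metis
      moreover have "A (cm x1 u)" using A1 u(1) A_cm by blast
      ultimately show ?thesis by blast
    qed
  qed
  ultimately show ?thesis by (simp add: Jsem_def)
qed

lemma J_down: assumes "J (cm t z)" "J z" shows "J t"
proof -
  have A: "A (cm t z)" and L: "cm e (cm t z) = cm t z" and R: "Rsem cm (cm t z)"
    and P: "Psem cm (cm t z)" using assms(1) by (auto simp: Jsem_def)
  have Az: "A z" and Rz: "Rsem cm z" using assms(2) by (auto simp: Jsem_def)
  have canc: "cm a z = cm b z \<Longrightarrow> a = b" for a b using Rz by (simp add: Rsem_def)
  have At: "A t" unfolding Asem_def
  proof (intro allI)
    fix y z'
    have "cm (cm (cm y z') t) z = cm (cm y (cm z' t)) z"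
      using A_assoc[OF Az] A_assoc[OF A] by metis
    then show "cm (cm y z') t = cm y (cm z' t)" using canc by blast
  qed
  moreover have "cm e t = t"
    using canc[of "cm e t" t] A_assoc[OF Az, of e t] L by simp
  moreover have "Rsem cm t" using R A_assoc[OF Az] unfolding Rsem_def by metis
  moreover have "Psem cm t" unfolding Psem_def
  proof (intro allI impI)
    fix p q r assume h: "A p \<and> A q \<and> A r \<and> cm p q = cm r t"
    have "cm p (cm q z) = cm r (cm t z)" using h A_assoc[OF Az] by metis
    moreover have "A (cm q z)" using h Az A_cm by blast
    ultimately obtain u where u: "A u" "(r = cm p u \<and> cm u (cm t z) = cm q z) \<or> (p = cm r u \<and> cm u (cm q z) = cm t z)"
      using P h unfolding Psem_def by blast
    then show "\<exists>u. A u \<and> ((r = cm p u \<and> cm u t = q) \<or> (p = cm r u \<and> cm u q = t))"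
      using canc A_assoc[OF Az] by metis
  qed
  ultimately show ?thesis by (simp add: Jsem_def)
qed

lemma J_A: "J x \<Longrightarrow> A x" by (simp add: Jsem_def)

lemma seq5s: assumes "J x" "J y" "J z" "J w"
  shows "(cm x y = cm z w) = (\<exists>u. J u \<and> ((z = cm x u \<and> cm u w = y) \<or> (x = cm z u \<and> cm u y = w)))"
proof
  assume h: "cm x y = cm z w"
  obtain u where u: "A u" "(z = cm x u \<and> cm u w = y) \<or> (x = cm z u \<and> cm u y = w)"
    using assms h unfolding Jsem_def Psem_def by blast
  then show "\<exists>u. J u \<and> ((z = cm x u \<and> cm u w = y) \<or> (x = cm z u \<and> cm u y = w))"
    using J_down assms by metis
next
  assume "\<exists>u. J u \<and> ((z = cm x u \<and> cm u w = y) \<or> (x = cm z u \<and> cm u y = w))"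
  then show "cm x y = cm z w" using assms J_A A_assoc by metis
qed

end


definition A_at :: "nat \<Rightarrow> fm" where
  "A_at k = All (All (Eq (Cm (Cm (Var 1) (Var 0)) (Var (Suc (Suc k)))) (Cm (Var 1) (Cm (Var 0) (Var (Suc (Suc k)))))))"

definition Jf :: fm where
  "Jf = And (And (And (A_at 0) (Eq (Cm E (Var 0)) (Var 0)))
     (All (All (Imp (Eq (Cm (Var 1) (Var 2)) (Cm (Var 0) (Var 2))) (Eq (Var 1) (Var 0))))))
     (All (All (All (Imp (And (And (And (A_at 2) (A_at 1)) (A_at 0)) (Eq (Cm (Var 2) (Var 1)) (Cm (Var 0) (Var 3))))
       (Ex (And (A_at 0) (Or (And (Eq (Var 1) (Cm (Var 3) (Var 0))) (Eq (Cm (Var 0) (Var 4)) (Var 2)))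
                             (And (Eq (Var 3) (Cm (Var 1) (Var 0))) (Eq (Cm (Var 0) (Var 2)) (Var 4))))))))))"

lemma eval_A_at[simp]: "eval e pr cm env (A_at k) = Asem cm (env k)"
  by (simp add: A_at_def Asem_def)

lemma eval_Jf[simp]: "eval e pr cm env Jf = Jsem e cm (env 0)"
  unfolding Jf_def Jsem_def Rsem_def Psem_def by simp

fun bnd_tm :: "nat \<Rightarrow> tm \<Rightarrow> bool" where
  "bnd_tm n (Var k) = (k < n)"
| "bnd_tm n E = True"
| "bnd_tm n (Pr s t) = (bnd_tm n s \<and> bnd_tm n t)"
| "bnd_tm n (Cm s t) = (bnd_tm n s \<and> bnd_tm n t)"

fun bnd :: "nat \<Rightarrow> fm \<Rightarrow> bool" where
  "bnd n (Eq s t) = (bnd_tm n s \<and> bnd_tm n t)"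
| "bnd n FF = True"
| "bnd n (Neg p) = bnd n p"
| "bnd n (And p q) = (bnd n p \<and> bnd n q)"
| "bnd n (Or p q) = (bnd n p \<and> bnd n q)"
| "bnd n (Imp p q) = (bnd n p \<and> bnd n q)"
| "bnd n (Iff p q) = (bnd n p \<and> bnd n q)"
| "bnd n (All p) = bnd (Suc n) p"
| "bnd n (Ex p) = bnd (Suc n) p"

lemma bnd_tm_fv: "bnd_tm n t \<Longrightarrow> fv_tm t \<subseteq> {..<n}"
  by (induction t) auto

lemma bnd_fv: "bnd n p \<Longrightarrow> fv p \<subseteq> {..<n}"
proof (induction p arbitrary: n)
  case (All p)
  then have "fv p \<subseteq> {..<Suc n}" by simp
  then show ?case by auto
next
  case (Ex p)
  then have "fv p \<subseteq> {..<Suc n}" by simp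
  then show ?case by auto
qed (use bnd_tm_fv in fastforce)+

lemma bnd_A_at[simp]: "bnd n (A_at k) = (k < n)"
  by (simp add: A_at_def)

lemma fv_Jf: "fv Jf \<subseteq> {0}"
proof -
  have "bnd 1 Jf" by (simp add: Jf_def)
  then show ?thesis using bnd_fv by fastforce
qed

lemma eval_lift[simp]: "eval_tm e pr cm (case_nat a env) (lift_tm t) = eval_tm e pr cm env t"
  by (induction t) auto

lemma Seq2_sem: "eval e pr cm env Seq2 = (\<forall>a b c d. pr a b = pr c d \<longrightarrow> a = c \<and> b = d)"
  by (simp add: Seq2_def)

lemma seqm_of: assumes "\<forall>ax\<in>Seq_axioms. \<forall>env. eval e pr cm env ax" shows "seqm e pr cm"
proof -
  have h1: "\<forall>env. eval e pr cm env Seq1" and h2: "\<forall>env. eval e pr cm env Seq2"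
    and h3: "\<forall>env. eval e pr cm env Seq3"
    and h4: "\<forall>env. eval e pr cm env Seq4" and h5: "\<forall>env. eval e pr cm env Seq5"
    using assms by (auto simp: Seq_axioms_def)
  have 1: "\<And>x y. pr x y \<noteq> e" using h1 by (simp add: Seq1_def)
  have 2: "\<And>x1 x2 y1 y2. pr x1 x2 = pr y1 y2 \<Longrightarrow> x1 = y1 \<and> x2 = y2" using h2 unfolding Seq2_sem by blast
  have 3: "\<And>x. cm x e = x" using h3 by (simp add: Seq3_def)
  have 4: "\<And>x y z. cm x (pr y z) = pr (cm x y) z" using h4 by (simp add: Seq4_def)
  have 5: "\<And>x. x = e \<or> (\<exists>y z. x = pr y z)" using h5 by (simp add: Seq5_def)
  show ?thesis by (unfold_locales; fact 1 2 3 4 5)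
qed

lemma r1: "seqm e pr cm \<Longrightarrow> eval e pr cm env (rel Jf Seq1)"
  by (simp add: Seq1_def seqm.s1)
lemma r2: "seqm e pr cm \<Longrightarrow> eval e pr cm env (rel Jf Seq2)"
  apply (simp add: Seq2_def) apply (intro allI impI) by (erule seqm.s2)
lemma r3: "seqm e pr cm \<Longrightarrow> eval e pr cm env (rel Jf Seq3s)"
  by (simp add: Seq3s_def seqm.s3 Jsem_def)
lemma r4: "seqm e pr cm \<Longrightarrow> eval e pr cm env (rel Jf Seq4)"
  by (simp add: Seq4_def seqm.s4)
lemma r5: assumes s: "seqm e pr cm" shows "eval e pr cm env (rel Jf Seq5s)"
  apply (simp add: Seq5s_def)
  apply (intro allI impI)
  apply (rule seqm.seq5s[OF s])
  by assumption+
lemma pt: assumes s: "seqm e pr cm" shows "eval e pr cm env (prec_trans Jf)"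
  apply (simp add: prec_trans_def prec_def mem_def)
  apply (intro allI impI)
  apply (elim conjE exE)
  subgoal for x y w z1 z2
    apply (rule exI[of _ "cm z1 z2"])
    using seqm.J_cm[OF s, of z1 z2] seqm.A_assoc[OF s seqm.J_A[OF s, of z2], of x z1] by simp
  done
lemma dc: assumes s: "seqm e pr cm" shows "eval e pr cm env (J_down_closed Jf)"
  apply (simp add: J_down_closed_def prec_def mem_def)
  using seqm.J_down[OF s] by blast
lemma prefl_ok: assumes s: "seqm e pr cm" shows "eval e pr cm env (prec_refl Jf)"
  apply (simp add: prec_refl_def prec_def mem_def)
  using seqm.J_e[OF s] seqm.s3[OF s] by metis
lemma jp: assumes s: "seqm e pr cm" shows "eval e pr cm env (J_pair Jf)"
  apply (simp add: J_pair_def mem_def)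
  using seqm.J_pr[OF s] seqm.J_e[OF s] by blast

theorem lemma5:
  shows "\<exists>J. fv J \<subseteq> {0}
    \<and> (\<forall>\<phi>\<in>Seq_star_axioms. Seq_proves (rel J \<phi>))
    \<and> Seq_proves (prec_refl J)
    \<and> Seq_proves (prec_trans J)
    \<and> Seq_proves (J_down_closed J)
    \<and> Seq_proves (J_pair J)"
proof (intro exI[of _ Jf] conjI ballI)
  show "fv Jf \<subseteq> {0}" by (rule fv_Jf)
next
  fix \<phi> assume "\<phi> \<in> Seq_star_axioms"
  then show "Seq_proves (rel Jf \<phi>)"
    unfolding Seq_proves_def
  proof (intro allI impI)
    fix e :: nat and pr cm env
    assume "\<forall>ax\<in>Seq_axioms. \<forall>env. eval e pr cm env ax"
    then have s: "seqm e pr cm" by (rule seqm_of)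
    show "eval e pr cm env (rel Jf \<phi>)"
      using \<open>\<phi> \<in> Seq_star_axioms\<close> r1[OF s] r2[OF s] r3[OF s] r4[OF s] r5[OF s]
      unfolding Seq_star_axioms_def by blast
  qed
next
  show "Seq_proves (prec_refl Jf)" unfolding Seq_proves_def by (intro allI impI) (erule prefl_ok[OF seqm_of])
next
  show "Seq_proves (prec_trans Jf)" unfolding Seq_proves_def by (intro allI impI) (erule pt[OF seqm_of])
next
  show "Seq_proves (J_down_closed Jf)" unfolding Seq_proves_def by (intro allI impI) (erule dc[OF seqm_of])
next
  show "Seq_proves (J_pair Jf)" unfolding Seq_proves_def by (intro allI impI) (erule jp[OF seqm_of])
qed

end
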